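(* Let $j\geq 7$ and $\mu_1,\mu_2>0$. Then for every integer $l$ with $2\leq l\leq \lfloor (j+1)/2\rfloor$ one has $\mathbf{g}_1(j,l)>0$ and $\chi(j,l):=\mu_1\mu_2\left[\mathbf{g}_1(j,l)^2+\mathbf{g}_2(j)^2-\mathbf{g}_3(j,l)^2\right]+(\mu_1^2+\mu_2^2)\,\mathbf{g}_1(j,l)\,\mathbf{g}_2(j)>0 .$
   Context: For $\varphi\in\mathbb{R}\setminus2\pi\mathbb{Z}$ let $\mathbf{f}(\varphi)=\frac{1}{8|\sin(\varphi/2)|}\left(\frac{2}{\sin^2(\varphi/2)}-1\right)+\cos\varphi$. Define $\mathbf{g}_1(j,l)=\sum_{k=1}^{j-1}\mathbf{f}(\frac{2k\pi}{j})(1-\cos\frac{2(l-1)k\pi}{j})$, $\mathbf{g}_2(j)=\sum_{k=1}^{j}\mathbf{f}(\frac{(2k-1)\pi}{j})$, $\mathbf{g}_3(j,l)=\sum_{k=1}^{j}\mathbf{f}(\frac{(2k-1)\pi}{j})\cos\frac{(l-1)(2k-1)\pi}{j}$. *)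

theory Defs
  imports Complex_Main
begin

definition ff :: "real \<Rightarrow> real" where
  "ff \<phi> = 1 / (8 * \<bar>sin (\<phi>/2)\<bar>) * (2 / (sin (\<phi>/2))^2 - 1) + cos \<phi>"

definition g1 :: "nat \<Rightarrow> nat \<Rightarrow> real" where
  "g1 j l = (\<Sum>k=1..j-1. ff (2 * real k * pi / real j) *
              (1 - cos (2 * (real l - 1) * real k * pi / real j)))"

definition g2 :: "nat \<Rightarrow> real" where
  "g2 j = (\<Sum>k=1..j. ff ((2 * real k - 1) * pi / real j))"

definition g3 :: "nat \<Rightarrow> nat \<Rightarrow> real" where
  "g3 j l = (\<Sum>k=1..j. ff ((2 * real k - 1) * pi / real j) *
              cos ((real l - 1) * (2 * real k - 1) * pi / real j))"

definition chi :: "real \<Rightarrow> real \<Rightarrow> nat \<Rightarrow> nat \<Rightarrow> real" where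
  "chi \<mu>1 \<mu>2 j l = \<mu>1 * \<mu>2 * ((g1 j l)^2 + (g2 j)^2 - (g3 j l)^2)
                    + (\<mu>1^2 + \<mu>2^2) * g1 j l * g2 j"

end

theory Submission
  imports Defs "HOL-Analysis.Analysis"
begin


lemma tel1: "2 * sin y * (\<Sum>k=1..N. cos ((2 * real k - 1) * y)) = sin (2 * real N * y)"
proof (induction N)
  case 0 then show ?case by simp
next
  case (Suc N)
  have a1: "y + (2 * real (Suc N) - 1) * y = 2 * real (Suc N) * y" by (simp add: algebra_simps)
  have a2: "y - (2 * real (Suc N) - 1) * y = - (2 * real N * y)" by (simp add: algebra_simps)
  have "2 * sin y * cos ((2 * real (Suc N) - 1) * y) = sin (2 * real (Suc N) * y) - sin (2 * real N * y)"
    using sin_times_cos[of y "(2 * real (Suc N) - 1) * y"] unfolding a1 a2 by simp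
  then show ?case using Suc by (simp add: distrib_left)
qed

lemma tel2: "2 * sin y * (\<Sum>k=1..N. cos (2 * real k * y)) = sin ((2 * real N + 1) * y) - sin y"
proof (induction N)
  case 0 then show ?case by simp
next
  case (Suc N)
  have a1: "y + 2 * real (Suc N) * y = (2 * real (Suc N) + 1) * y" by (simp add: algebra_simps)
  have a2: "y - 2 * real (Suc N) * y = - ((2 * real N + 1) * y)" by (simp add: algebra_simps)
  have "2 * sin y * cos (2 * real (Suc N) * y) = sin ((2 * real (Suc N) + 1) * y) - sin ((2 * real N + 1) * y)"
    using sin_times_cos[of y "2 * real (Suc N) * y"] unfolding a1 a2 by simp
  then show ?case using Suc by (simp add: distrib_left)
qed

lemma sumS1:
  assumes "0 < p" "p < n"
  shows "(\<Sum>k=1..n-1. cos (real p * (2 * real k * pi / real n))) = -1"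
proof -
  define y where "y = real p * pi / real n"
  have y0: "0 < y" "y < pi" using assms by (auto simp: y_def field_simps)
  have sy: "sin y > 0" using y0 sin_gt_zero by blast
  have e: "\<And>k. real p * (2 * real k * pi / real n) = 2 * real k * y" by (simp add: y_def)
  have "(2 * real (n-1) + 1) * y = 2 * real p * pi - y"
    using assms by (simp add: y_def of_nat_diff field_simps)
  then have "sin ((2 * real (n-1) + 1) * y) = - sin y"
    by (simp add: sin_diff)
  with tel2[of y "n-1"] have "2 * sin y * (\<Sum>k=1..n-1. cos (2 * real k * y)) = 2 * sin y * (-1)" by simp
  then show ?thesis using sy unfolding e by (metis mult_cancel_left order_less_irrefl zero_neq_numeral mult_eq_0_iff)
qed

lemma sumS2:
  assumes "0 < p" "p < n"
  shows "(\<Sum>k=1..n. cos (real p * ((2 * real k - 1) * pi / real n))) = 0"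
proof -
  define y where "y = real p * pi / real n"
  have y0: "0 < y" "y < pi" using assms by (auto simp: y_def field_simps)
  have sy: "sin y > 0" using y0 sin_gt_zero by blast
  have e: "\<And>k. real p * ((2 * real k - 1) * pi / real n) = (2 * real k - 1) * y" by (simp add: y_def)
  have "2 * real n * y = real (2*p) * pi" using assms by (simp add: y_def)
  then have "sin (2 * real n * y) = 0" by (simp only: sin_npi)
  with tel1[of y n] have "2 * sin y * (\<Sum>k=1..n. cos ((2 * real k - 1) * y)) = 0" by simp
  then show ?thesis using sy unfolding e by simp
qed



lemma sin_ub:
  fixes x lo hi :: real
  assumes "0 \<le> lo" "lo \<le> x" "x \<le> hi"
  shows "sin x \<le> hi - lo^3/6 + hi^5/120 - lo^7/5040 + hi^8/40320"
proof -
  have "\<bar>sin x - (\<Sum>m<8. sin_coeff m * x ^ m)\<bar> \<le> inverse (fact 8) * \<bar>x\<bar> ^ 8"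
    by (rule Maclaurin_sin_bound)
  moreover have "(\<Sum>m<8. sin_coeff m * x ^ m) = x - x^3/6 + x^5/120 - x^7/5040"
  proof -
    have e: "(\<Sum>m<(8::nat). g m) = g 0 + g 1 + g 2 + g 3 + g 4 + g 5 + g 6 + (g 7::real)" for g
      by (simp add: eval_nat_numeral)
    have c: "sin_coeff 0 = 0" "sin_coeff 1 = 1" "sin_coeff 2 = 0" "sin_coeff 3 = -1/6"
       "sin_coeff 4 = 0" "sin_coeff 5 = 1/120" "sin_coeff 6 = 0" "sin_coeff 7 = -1/5040"
      by (simp_all add: sin_coeff_def fact_numeral)
    show ?thesis unfolding e c by simp
  qed
  ultimately have "sin x \<le> x - x^3/6 + x^5/120 - x^7/5040 + x^8/40320"
    using assms by (simp add: fact_numeral abs_if split: if_splits)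
  moreover have "x^3 \<ge> lo^3" "x^7 \<ge> lo^7" "x^5 \<le> hi^5" "x^8 \<le> hi^8"
    using assms by (auto intro: power_mono)
  ultimately show ?thesis using assms by linarith
qed

lemma t_mono:
  fixes s U :: real
  assumes "0 < s" "s \<le> U"
  shows "2/U - U \<le> 2/s - s"
proof -
  have "2/U \<le> 2/s" using assms by (simp add: frac_le)
  then show ?thesis using assms by linarith
qed

definition tt :: "nat \<Rightarrow> nat \<Rightarrow> real" where
  "tt N k = 2 / sin (real k * pi / real N) - sin (real k * pi / real N)"

lemma tt_sym: assumes "k \<le> N" "0 < N" shows "tt N (N - k) = tt N k"
proof -
  have "real (N - k) * pi / real N = pi - real k * pi / real N"
    using assms by (simp add: of_nat_diff field_simps)
  then show ?thesis by (simp add: tt_def)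
qed

lemma sin_kpos: assumes "0 < k" "k < N" shows "0 < sin (real k * pi / real N)"
  using assms by (intro sin_gt_zero) (auto simp: field_simps)

lemma tt_ge1: assumes "0 < k" "k < N" shows "tt N k \<ge> 1"
  using t_mono[OF sin_kpos[OF assms] sin_le_one] unfolding tt_def by simp

lemma tt_ge_lin: assumes "0 < k" "k < N"
  shows "tt N k \<ge> 2 / (real k * pi / real N) - real k * pi / real N"
  using t_mono[OF sin_kpos[OF assms] sin_x_le_x] unfolding tt_def by simp

lemma tt_ub: assumes "0 < k" "k < N" "sin (real k * pi / real N) \<le> U"
  shows "tt N k \<ge> 2 / U - U"
  using t_mono[OF sin_kpos[OF assms(1,2)] assms(3)] unfolding tt_def by simp

lemma sin_kpi_ub:
  assumes "0 < k" "0 < N"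
  shows "sin (real k * pi / real N) \<le> (real k*3.1416/real N) - (real k*3.14159/real N)^3/6
     + (real k*3.1416/real N)^5/120 - (real k*3.14159/real N)^7/5040 + (real k*3.1416/real N)^8/40320"
proof (rule sin_ub)
  have p1: "3.14159 \<le> pi" by (rule order_trans[OF _ pi_approx(1)]) simp
  have p2: "pi \<le> 3.1416" by (rule order_trans[OF pi_approx(2)]) simp
  note p = p1 p2
  show "0 \<le> real k*3.14159/real N" by simp
  show "real k*3.14159/real N \<le> real k * pi / real N"
    using p assms by (intro divide_right_mono mult_left_mono) auto
  show "real k * pi / real N \<le> real k*3.1416/real N"
    using p assms by (intro divide_right_mono mult_left_mono) auto
qed

lemma sum6: "(\<Sum>k=1..(6::nat). f k) = f 1 + f 2 + f 3 + f 4 + f 5 + (f 6 :: real)"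
  by (simp add: numeral_eq_Suc)


lemma KL7: "(\<Sum>k=1..(6::nat). tt 7 k) > 14"
proof -
  have s: "tt 7 6 = tt 7 1" "tt 7 5 = tt 7 2" "tt 7 4 = tt 7 3"
    using tt_sym[of 1 7] tt_sym[of 2 7] tt_sym[of 3 7] by simp_all
  have b1: "sin (real 1 * pi / real 7) \<le> 0.43389" using sin_kpi_ub[of 1 7] by (simp add: power_divide)
  have b2: "sin (real 2 * pi / real 7) \<le> 0.78185" using sin_kpi_ub[of 2 7] by (simp add: power_divide)
  have b3: "sin (real 3 * pi / real 7) \<le> 0.97517" using sin_kpi_ub[of 3 7] by (simp add: power_divide)
  have "tt 7 1 \<ge> 41755/10000" by (rule order_trans[OF _ tt_ub[OF _ _ b1]]) auto
  moreover have "tt 7 2 \<ge> 17761/10000" by (rule order_trans[OF _ tt_ub[OF _ _ b2]]) auto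
  moreover have "tt 7 3 \<ge> 10757/10000" by (rule order_trans[OF _ tt_ub[OF _ _ b3]]) auto
  ultimately show ?thesis unfolding sum6 s by linarith
qed

lemma sum7: "(\<Sum>k=1..(7::nat). f k) = f 1 + f 2 + f 3 + f 4 + f 5 + f 6 + (f 7 :: real)"
  by (simp add: numeral_eq_Suc)
lemma sum8: "(\<Sum>k=1..(8::nat). f k) = f 1 + f 2 + f 3 + f 4 + f 5 + f 6 + f 7 + (f 8 :: real)"
  by (simp add: numeral_eq_Suc)

lemma KL8: "(\<Sum>k=1..(7::nat). tt 8 k) > 16"
proof -
  have s: "tt 8 7 = tt 8 1" "tt 8 6 = tt 8 2" "tt 8 5 = tt 8 3"
    using tt_sym[of 1 8] tt_sym[of 2 8] tt_sym[of 3 8] by simp_all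
  have b1: "sin (real 1 * pi / real 8) \<le> 0.38269" using sin_kpi_ub[of 1 8] by (simp add: power_divide)
  have b2: "sin (real 2 * pi / real 8) \<le> 0.70712" using sin_kpi_ub[of 2 8] by (simp add: power_divide)
  have b3: "sin (real 3 * pi / real 8) \<le> 0.92397" using sin_kpi_ub[of 3 8] by (simp add: power_divide)
  have "tt 8 1 \<ge> 48434/10000" by (rule order_trans[OF _ tt_ub[OF _ _ b1]]) auto
  moreover have "tt 8 2 \<ge> 21212/10000" by (rule order_trans[OF _ tt_ub[OF _ _ b2]]) auto
  moreover have "tt 8 3 \<ge> 12406/10000" by (rule order_trans[OF _ tt_ub[OF _ _ b3]]) auto
  moreover have "tt 8 4 \<ge> 1" by (rule tt_ge1) auto
  ultimately show ?thesis unfolding sum7 s by linarith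
qed

lemma KL9: "(\<Sum>k=1..(8::nat). tt 9 k) > 18"
proof -
  have s: "tt 9 8 = tt 9 1" "tt 9 7 = tt 9 2" "tt 9 6 = tt 9 3" "tt 9 5 = tt 9 4"
    using tt_sym[of 1 9] tt_sym[of 2 9] tt_sym[of 3 9] tt_sym[of 4 9] by simp_all
  have b1: "sin (real 1 * pi / real 9) \<le> 0.34203" using sin_kpi_ub[of 1 9] by (simp add: power_divide)
  have b2: "sin (real 2 * pi / real 9) \<le> 0.64280" using sin_kpi_ub[of 2 9] by (simp add: power_divide)
  have b3: "sin (real 3 * pi / real 9) \<le> 0.86607" using sin_kpi_ub[of 3 9] by (simp add: power_divide)
  have b4: "sin (real 4 * pi / real 9) \<le> 0.98512" using sin_kpi_ub[of 4 9] by (simp add: power_divide)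
  have "tt 9 1 \<ge> 55054/10000" by (rule order_trans[OF _ tt_ub[OF _ _ b1]]) auto
  moreover have "tt 9 2 \<ge> 24685/10000" by (rule order_trans[OF _ tt_ub[OF _ _ b2]]) auto
  moreover have "tt 9 3 \<ge> 14431/10000" by (rule order_trans[OF _ tt_ub[OF _ _ b3]]) auto
  moreover have "tt 9 4 \<ge> 10450/10000" by (rule order_trans[OF _ tt_ub[OF _ _ b4]]) auto
  ultimately show ?thesis unfolding sum8 s by linarith
qed

lemma KLbig:
  assumes N: "N \<ge> 10"
  shows "(\<Sum>k=1..N-1. tt N k) > 2 * real N"
proof -
  define A where "A = {1,2,3,4,N-1,N-2,N-3,N-4::nat}"
  define B where "B = {1..N-1::nat}"
  have AB: "A \<subseteq> B" using N by (auto simp: A_def B_def)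
  obtain M where M: "N = M + 10" using N by (metis add.commute le_Suc_ex)
  have cA: "card A = 8" unfolding A_def M by simp
  have sA: "sum (tt N) A = tt N 1 + tt N 2 + tt N 3 + tt N 4 + tt N (N-1) + tt N (N-2) + tt N (N-3) + tt N (N-4)"
    unfolding A_def M by simp
  have sym: "tt N (N-k) = tt N k" if "k \<le> 4" for k using that N by (intro tt_sym) auto
  have rest: "sum (tt N) (B - A) \<ge> real (card (B - A)) * 1"
    by (rule sum_bounded_below) (auto simp: B_def intro: tt_ge1)
  have cBA: "card (B - A) = N - 9" using AB cA N by (simp add: card_Diff_subset B_def finite_subset)
  have split: "sum (tt N) B = sum (tt N) (B - A) + sum (tt N) A"
    using AB by (simp add: B_def sum.subset_diff)
  have l: "tt N k \<ge> 2 / (real k * pi / real N) - real k * pi / real N" if "k \<in> {1,2,3,4}" for k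
    using that N by (intro tt_ge_lin) auto
  have l1: "tt N 1 \<ge> 2 * real N / pi - pi / real N" using l[of 1] by simp
  have l2: "tt N 2 \<ge> real N / pi - 2 * pi / real N" using l[of 2] by simp
  have l3: "tt N 3 \<ge> 2 * real N / (3 * pi) - 3 * pi / real N" using l[of 3] by simp
  have l4: "tt N 4 \<ge> real N / (2 * pi) - 4 * pi / real N" using l[of 4] by simp
  have p2: "pi \<le> (31416/10000)" by (rule order_trans[OF pi_approx(2)]) simp
  have key: "2 * (2 * real N / pi - pi / real N + (real N / pi - 2 * pi / real N)
        + (2 * real N / (3 * pi) - 3 * pi / real N) + (real N / (2 * pi) - 4 * pi / real N))
        + (real N - 9) > 2 * real N"
  proof -
    have Nr: "real N \<ge> 10" using N by simp
    have e: "2 * (2 * real N / pi - pi / real N + (real N / pi - 2 * pi / real N)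
        + (2 * real N / (3 * pi) - 3 * pi / real N) + (real N / (2 * pi) - 4 * pi / real N))
        + (real N - 9) - 2 * real N
        = (real N ^ 2 * (25 - 3 * pi) - 27 * pi * real N - 60 * pi^2) / (3 * pi * real N)"
      using Nr by (simp add: field_simps power2_eq_square)
    have "real N ^ 2 * (25 - 3 * pi) - 27 * pi * real N - 60 * pi^2 > 0"
    proof -
      have a1: "real N ^ 2 * (25 - 3 * pi) \<ge> real N * 10 * (25 - 3 * pi)"
        using Nr p2 by (simp add: power2_eq_square mult_right_mono)
      have a2: "pi^2 \<le> (31416/10000) * pi" using p2 by (simp add: power2_eq_square)
      have h2: "real N * 10 * (25 - 3 * pi) - 27 * pi * real N = 250 * real N - 57 * (pi * real N)"
        by (simp add: algebra_simps)
      have h3: "pi * real N \<le> (31416 / 10000) * real N" using p2 Nr by (intro mult_right_mono) auto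
      show ?thesis using a1 a2 h2 h3 p2 Nr by linarith
    qed
    then have "(real N ^ 2 * (25 - 3 * pi) - 27 * pi * real N - 60 * pi^2) / (3 * pi * real N) > 0"
      using Nr by simp
    then show ?thesis using e by linarith
  qed
  have "sum (tt N) B \<ge> real (N - 9) + 2 * (tt N 1 + tt N 2 + tt N 3 + tt N 4)"
    using split rest cBA sA sym[of 1] sym[of 2] sym[of 3] sym[of 4] by simp
  moreover have "real (N - 9) = real N - 9" using N by simp
  ultimately show ?thesis using key l1 l2 l3 l4 by (simp add: B_def)
qed

lemma KL:
  assumes "N \<ge> 7"
  shows "(\<Sum>k=1..N-1. tt N k) > 2 * real N"
proof -
  consider "N = 7" | "N = 8" | "N = 9" | "N \<ge> 10" using assms by linarith
  then show ?thesis
  proof cases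
    case 1 then show ?thesis using KL7 by simp
  next
    case 2 then show ?thesis using KL8 by simp
  next
    case 3 then show ?thesis using KL9 by simp
  next
    case 4 then show ?thesis by (rule KLbig)
  qed
qed



definition AA :: "real \<Rightarrow> real" where
  "AA \<phi> = 1 / (8 * \<bar>sin (\<phi>/2)\<bar>) * (2 / (sin (\<phi>/2))^2 - 1)"

lemma ff_AA: "ff \<phi> = AA \<phi> + cos \<phi>" by (simp add: ff_def AA_def)

lemma AA_pos: assumes "sin (\<phi>/2) \<noteq> 0" shows "AA \<phi> > 0"
proof -
  let ?s = "sin (\<phi>/2)"
  have "?s^2 \<le> 1" using sin_squared_eq[of "\<phi>/2"] by (smt (verit) zero_le_power2)
  moreover have "?s^2 > 0" using assms by simp
  ultimately have "2 / ?s^2 \<ge> 2" by (simp add: field_simps)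
  then have "2 / ?s^2 - 1 > 0" by linarith
  moreover have "1 / (8 * \<bar>?s\<bar>) > 0" using assms by simp
  ultimately show ?thesis unfolding AA_def by (metis mult_pos_pos)
qed

lemma AA_nonneg: "AA \<phi> \<ge> 0"
  using AA_pos[of \<phi>] by (cases "sin (\<phi>/2) = 0") (auto simp: AA_def)

lemma one_minus_cos: "1 - cos (\<phi>::real) = 2 * (sin (\<phi>/2))^2"
  using cos_double_sin[of "\<phi>/2"] by simp

lemma AA_1mcos: assumes "sin (\<phi>/2) > 0"
  shows "AA \<phi> * (1 - cos \<phi>) = (2 / sin (\<phi>/2) - sin (\<phi>/2)) / 4"
  using assms unfolding one_minus_cos AA_def by (simp add: field_simps power2_eq_square)

lemma split_sum:
  fixes N :: nat
  shows "N \<ge> 1 \<Longrightarrow> (\<Sum>i=1..2*N-1. h i) = (((\<Sum>k=1..N-1. h (2*k)) + (\<Sum>k=1..N. h (2*k-1))) :: real)"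
proof (induction N rule: dec_induct)
  case base then show ?case by simp
next
  case (step N)
  have "{1..2*Suc N-1} = insert (2*N+1) (insert (2*N) {1..2*N-1})" using step by auto
  then have "(\<Sum>i=1..2*Suc N-1. h i) = h (2*N+1) + h (2*N) + (\<Sum>i=1..2*N-1. h i)"
    using step by simp
  moreover have "(\<Sum>k=1..Suc N-1. h (2*k)) = h (2*N) + (\<Sum>k=1..N-1. h (2*k))"
    using step by (cases N) (auto simp: add.commute)
  moreover have "(\<Sum>k=1..Suc N. h (2*k-1)) = h (2*N+1) + (\<Sum>k=1..N. h (2*k-1))"
    by (simp add: add.commute)
  ultimately show ?case using step by simp
qed



theorem mainTheorem7:
  fixes j l :: nat and \<mu>1 \<mu>2 :: real
  assumes "j \<ge> 7" and "\<mu>1 > 0" and "\<mu>2 > 0"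
    and "2 \<le> l" and "l \<le> (j + 1) div 2"
  shows "g1 j l > 0 \<and> chi \<mu>1 \<mu>2 j l > 0"
proof -
  define m where "m = l - 1"
  define M where "M = real m"
  have m1: "m \<ge> 1" and mj: "2 * m + 1 \<le> j" using assms(4,5) by (auto simp: m_def)
  have jpos: "real j > 0" using assms(1) by simp
  have hML: "real l - 1 = M" using assms(4) by (simp add: M_def m_def of_nat_diff)
  define th where "th k = 2 * real k * pi / real j" for k :: nat
  define ps where "ps k = (2 * real k - 1) * pi / real j" for k :: nat
  have S1: "(\<Sum>k=1..j-1. cos (real p * th k)) = -1" if "0 < p" "p < j" for p
    using sumS1[OF that] by (simp add: th_def)
  have S2: "(\<Sum>k=1..j. cos (real p * ps k)) = 0" if "0 < p" "p < j" for p
    using sumS2[OF that] by (simp add: ps_def)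
  have S1a: "(\<Sum>k=1..j-1. cos (th k)) = -1" using S1[of 1] assms(1) by simp
  have S1b: "(\<Sum>k=1..j-1. cos ((M + 1) * th k)) = -1" using S1[of "m+1"] mj m1 by (simp add: M_def add.commute)
  have S2a: "(\<Sum>k=1..j. cos (ps k)) = 0" using S2[of 1] assms(1) by simp
  have S2b: "(\<Sum>k=1..j. cos ((M + 1) * ps k)) = 0" using S2[of "m+1"] mj m1 by (simp add: M_def add.commute)
  have t1: "ff (th k) * (1 - cos (2 * (real l - 1) * real k * pi / real j))
      = AA (th k) * (1 - cos (M * th k)) + (cos (th k) - cos ((M + 1) * th k) / 2 - cos ((M - 1) * th k) / 2)" for k
  proof -
    have "2 * (real l - 1) * real k * pi / real j = M * th k" by (simp add: hML th_def)
    moreover have "cos (th k) * cos (M * th k) = (cos ((M - 1) * th k) + cos ((M + 1) * th k)) / 2"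
      using cos_times_cos[of "M * th k" "th k"] by (simp add: algebra_simps)
    ultimately show ?thesis by (simp add: ff_AA algebra_simps)
  qed
  have g1e: "g1 j l = (\<Sum>k=1..j-1. AA (th k) * (1 - cos (M * th k))) + (-1 + 1/2
       - (\<Sum>k=1..j-1. cos ((M - 1) * th k)) / 2)"
  proof -
    have "g1 j l = (\<Sum>k=1..j-1. AA (th k) * (1 - cos (M * th k)) + (cos (th k) - cos ((M + 1) * th k) / 2 - cos ((M - 1) * th k) / 2))"
      unfolding g1_def th_def[symmetric] by (intro sum.cong refl) (rule t1)
    also have "\<dots> = (\<Sum>k=1..j-1. AA (th k) * (1 - cos (M * th k))) + ((\<Sum>k=1..j-1. cos (th k)) - (\<Sum>k=1..j-1. cos ((M + 1) * th k)) / 2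
        - (\<Sum>k=1..j-1. cos ((M - 1) * th k)) / 2)"
      by (simp add: sum.distrib sum_subtractf sum_divide_distrib)
    finally show ?thesis using S1a S1b by simp
  qed
  have g2e: "g2 j = (\<Sum>k=1..j. AA (ps k))"
  proof -
    have "g2 j = (\<Sum>k=1..j. AA (ps k) + cos (ps k))"
      unfolding g2_def ps_def[symmetric] by (intro sum.cong refl) (simp add: ff_AA)
    then show ?thesis using S2a by (simp add: sum.distrib)
  qed
  have t3: "ff (ps k) * cos ((real l - 1) * (2 * real k - 1) * pi / real j)
      = AA (ps k) * cos (M * ps k) + (cos ((M + 1) * ps k) / 2 + cos ((M - 1) * ps k) / 2)" for k
  proof -
    have "(real l - 1) * (2 * real k - 1) * pi / real j = M * ps k" by (simp add: hML ps_def)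
    moreover have "cos (ps k) * cos (M * ps k) = (cos ((M - 1) * ps k) + cos ((M + 1) * ps k)) / 2"
      using cos_times_cos[of "M * ps k" "ps k"] by (simp add: algebra_simps)
    ultimately show ?thesis by (simp add: ff_AA algebra_simps)
  qed
  have g3e: "g3 j l = (\<Sum>k=1..j. AA (ps k) * cos (M * ps k)) + (\<Sum>k=1..j. cos ((M - 1) * ps k)) / 2"
  proof -
    have "g3 j l = (\<Sum>k=1..j. AA (ps k) * cos (M * ps k) + (cos ((M + 1) * ps k) / 2 + cos ((M - 1) * ps k) / 2))"
      unfolding g3_def ps_def[symmetric] by (intro sum.cong refl) (rule t3)
    then show ?thesis using S2b by (simp add: sum.distrib sum_divide_distrib[symmetric])
  qed
  have psh: "ps k / 2 = real (2*k-1) * pi / real (2*j)" if "1 \<le> k" for k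
    using that jpos by (simp add: ps_def of_nat_diff field_simps)
  have sinps: "sin (ps k / 2) > 0" if "1 \<le> k" "k \<le> j" for k
    unfolding psh[OF that(1)] using that by (intro sin_kpos) auto
  have thh: "th k / 2 = real k * pi / real j" for k by (simp add: th_def)
  have sinth: "sin (th k / 2) > 0" if "1 \<le> k" "k \<le> j - 1" for k
    unfolding thh using that by (intro sin_kpos) auto
  define G1A where "G1A = (\<Sum>k=1..j-1. AA (th k) * (1 - cos (M * th k)))"
  define G2A where "G2A = (\<Sum>k=1..j. AA (ps k))"
  define G3A where "G3A = (\<Sum>k=1..j. AA (ps k) * cos (M * ps k))"
  have AAps: "AA (ps k) > 0" if "k \<in> {1..j}" for k
    using sinps[of k] that by (intro AA_pos) auto
  have G2pos: "G2A > 0" unfolding G2A_def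
    using assms(1) AAps by (intro sum_pos) auto
  have G3abs: "\<bar>G3A\<bar> \<le> G2A"
  proof -
    have "\<bar>G3A\<bar> \<le> (\<Sum>k=1..j. \<bar>AA (ps k) * cos (M * ps k)\<bar>)" unfolding G3A_def by (rule sum_abs)
    also have "\<dots> \<le> G2A" unfolding G2A_def
    proof (rule sum_mono)
      fix k
      have "\<bar>AA (ps k) * cos (M * ps k)\<bar> = AA (ps k) * \<bar>cos (M * ps k)\<bar>" using AA_nonneg by (simp add: abs_mult)
      also have "\<dots> \<le> AA (ps k) * 1" using AA_nonneg by (intro mult_left_mono) auto
      finally show "\<bar>AA (ps k) * cos (M * ps k)\<bar> \<le> AA (ps k)" by simp
    qed
    finally show ?thesis .
  qed
  show ?thesis
  proof (cases "m = 1")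
    case False
    then have m2: "m \<ge> 2" using m1 by simp
    have Mm: "M - 1 = real (m - 1)" using m1 by (simp add: M_def of_nat_diff)
    have c1: "(\<Sum>k=1..j-1. cos ((M - 1) * th k)) = -1" unfolding Mm using m2 mj by (intro S1) auto
    have c2: "(\<Sum>k=1..j. cos ((M - 1) * ps k)) = 0" unfolding Mm using m2 mj by (intro S2) auto
    have a: "g1 j l = G1A" using g1e c1 by (simp add: G1A_def)
    have c: "g3 j l = G3A" using g3e c2 by (simp add: G3A_def)
    have b: "g2 j = G2A" using g2e by (simp add: G2A_def)
    have G1pos: "G1A > 0" unfolding G1A_def
    proof (rule sum_pos2[where i=1])
      show "finite {1..j-1}" by simp
      show "1 \<in> {1..j-1}" using assms(1) by simp
      have "sin (M * th 1 / 2) > 0" unfolding M_def th_def using mj m1 jpos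
        by (intro sin_gt_zero) (auto simp: field_simps)
      then have "1 - cos (M * th 1) > 0" unfolding one_minus_cos by simp
      moreover have "AA (th 1) > 0" using sinth[of 1] assms(1) by (intro AA_pos) (simp add: less_le)
      ultimately show "0 < AA (th 1) * (1 - cos (M * th 1))" by simp
      show "0 \<le> AA (th i) * (1 - cos (M * th i))" if "i \<in> {1..j-1}" for i
        using AA_nonneg by (auto intro!: mult_nonneg_nonneg)
    qed
    have sq: "G3A^2 \<le> G2A^2" using G3abs by (metis abs_le_square_iff abs_of_pos G2pos)
    have "G1A^2 + G2A^2 - G3A^2 > 0" using sq G1pos by (smt (verit) zero_less_power2)
    then have p1: "\<mu>1 * \<mu>2 * (G1A^2 + G2A^2 - G3A^2) > 0" using assms(2,3) by simp
    have p2: "(\<mu>1^2 + \<mu>2^2) * G1A * G2A > 0" using assms(2,3) G1pos G2pos by (intro mult_pos_pos add_pos_pos) auto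
    show ?thesis unfolding chi_def a b c using G1pos p1 p2 by linarith
  next
    case True
    then have M1: "M = 1" by (simp add: M_def)
    have c1: "(\<Sum>k=1..j-1. cos ((M - 1) * th k)) = real j - 1" using M1 assms(1) by (simp add: of_nat_diff)
    have c2: "(\<Sum>k=1..j. cos ((M - 1) * ps k)) = real j" using M1 by simp
    have a: "g1 j l = G1A - real j / 2" using g1e c1 by (simp add: G1A_def field_simps)
    have c: "g3 j l = G3A + real j / 2" using g3e c2 by (simp add: G3A_def)
    have b: "g2 j = G2A" using g2e by (simp add: G2A_def)
    have G1tt: "G1A = (\<Sum>k=1..j-1. tt (2*j) (2*k)) / 4"
      unfolding G1A_def sum_divide_distrib
    proof (rule sum.cong[OF refl])
      fix k assume k: "k \<in> {1..j-1}"
      have "AA (th k) * (1 - cos (M * th k)) = (2 / sin (th k / 2) - sin (th k / 2)) / 4"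
        using AA_1mcos[OF sinth] k M1 by auto
      also have "\<dots> = tt (2*j) (2*k) / 4" unfolding tt_def thh by simp
      finally show "AA (th k) * (1 - cos (M * th k)) = tt (2*j) (2*k) / 4" .
    qed
    have G23: "G2A - G3A = (\<Sum>k=1..j. tt (2*j) (2*k-1)) / 4"
    proof -
      have "G2A - G3A = (\<Sum>k=1..j. AA (ps k) * (1 - cos (ps k)))"
        unfolding G2A_def G3A_def M1 by (simp add: sum_subtractf[symmetric] algebra_simps)
      also have "\<dots> = (\<Sum>k=1..j. tt (2*j) (2*k-1) / 4)"
      proof (rule sum.cong[OF refl])
        fix k assume k: "k \<in> {1..j}"
        have pk: "ps k / 2 = real (2*k-1) * pi / real (2*j)" using psh k by auto
        have "AA (ps k) * (1 - cos (ps k)) = (2 / sin (ps k / 2) - sin (ps k / 2)) / 4"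
          using AA_1mcos[OF sinps] k by auto
        also have "\<dots> = tt (2*j) (2*k-1) / 4" unfolding tt_def pk by simp
        finally show "AA (ps k) * (1 - cos (ps k)) = tt (2*j) (2*k-1) / 4" .
      qed
      finally show ?thesis by (simp add: sum_divide_distrib)
    qed
    have G1j: "G1A = (\<Sum>k=1..j-1. tt j k) / 4"
      unfolding G1tt by (simp add: tt_def)
    have KLj: "(\<Sum>k=1..j-1. tt j k) > 2 * real j" using KL assms(1) by simp
    have KL2j: "(\<Sum>i=1..2*j-1. tt (2*j) i) > 2 * real (2*j)" using KL[of "2*j"] assms(1) by simp
    have spl: "(\<Sum>i=1..2*j-1. tt (2*j) i) = (\<Sum>k=1..j-1. tt (2*j) (2*k)) + (\<Sum>k=1..j. tt (2*j) (2*k-1))"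
      using split_sum[of j "tt (2*j)"] assms(1) by simp
    have apos: "g1 j l > 0" using a G1j KLj by simp
    have P: "g1 j l + g2 j - g3 j l > 0" using a b c G1tt G23 spl KL2j by simp
    have Q: "g2 j + g3 j l > 0"
    proof -
      have "G2A + G3A = (\<Sum>k=1..j. AA (ps k) * (1 + cos (ps k)))"
        unfolding G2A_def G3A_def M1 by (simp add: sum.distrib[symmetric] algebra_simps)
      also have "\<dots> \<ge> 0" using AA_nonneg by (intro sum_nonneg mult_nonneg_nonneg) (auto simp: add.commute intro: add_nonneg_nonneg[OF zero_le_one] , smt (verit) cos_ge_minus_one)
      finally show ?thesis using b c jpos by simp
    qed
    have bpos: "g2 j > 0" using b G2pos by simp
    define x where "x = g1 j l" define y where "y = g2 j" define z where "z = g3 j l"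
    have "chi \<mu>1 \<mu>2 j l - \<mu>1 * \<mu>2 * ((x + y - z) * (x + (y + z))) = (\<mu>1 - \<mu>2)^2 * (x * y)"
      unfolding chi_def x_def y_def z_def by (simp add: power2_eq_square algebra_simps)
    moreover have "(\<mu>1 - \<mu>2)^2 * (x * y) \<ge> 0" using apos bpos by (simp add: x_def y_def)
    moreover have "\<mu>1 * \<mu>2 * ((x + y - z) * (x + (y + z))) > 0"
      using P Q apos assms(2,3) by (simp add: x_def y_def z_def)
    ultimately show ?thesis using apos by linarith
  qed
qed


end
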